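(* $\mathsf{C}_{\mathbb{N}^\mathbb{N}} \equiv_{\mathrm{sW}} \mathsf{FindHS}_{\boldsymbol{\Delta}^0_1} \equiv_{\mathrm{sW}} \mathsf{FindHS}_{\boldsymbol{\Pi}^0_1}$.
   Context: Strong Weihrauch reducibility: $f\le_{\mathrm{sW}} g$ iff there are computable $\Phi,\Psi:\subseteq\mathbb{N}^\mathbb{N}\to\mathbb{N}^\mathbb{N}$ such that for every realizer $G$ of $g$, $\Psi\circ G\circ\Phi$ realizes $f$; $\equiv_{\mathrm{sW}}$ is reducibility both ways. The Ramsey space $[\mathbb{N}]^\mathbb{N}$ is the set of strictly increasing functions $\mathbb{N}\to\mathbb{N}$ with the Baire-space topology; $fg=f\circ g$. For $P\subseteq[\mathbb{N}]^\mathbb{N}$, $f$ is homogeneous for $P$ if either $fg\in P$ for all $g\in[\mathbb{N}]^\mathbb{N}$ ($f$ lands in $P$) or $fg\notin P$ for all $g$ ($f$ avoids $P$); $\mathrm{HS}(P)$ is the set of homogeneous solutions. A name for an open $P\subseteq[\mathbb{N}]^\mathbb{N}$ is an enumeration of a set of finite strictly increasing strings whose cones have union $P$; a name for a clopen set is a pair of names for it and its complement. $\mathsf{FindHS}_{\boldsymbol{\Pi}^0_1}$: input an open $P$ with $\mathrm{HS}(P)\setminus P\neq\emptyset$, output any element of $\mathrm{HS}(P)\setminus P$. $\mathsf{FindHS}_{\boldsymbol{\Delta}^0_1}$: input a clopen $D$ with $\mathrm{HS}(D)\cap D\ne\emptyset$, output any element of $\mathrm{HS}(D)\cap D$. $\mathsf{C}_{\mathbb{N}^\mathbb{N}}$: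 input a name (e.g. a tree $T$ on $\mathbb{N}$ with $[T]$ the set) of a nonempty closed subset of $\mathbb{N}^\mathbb{N}$, output any element of it. *)

theory Defs
  imports Main "HOL-Library.Nat_Bijection"
begin

type_synonym baire = "nat \<Rightarrow> nat"

text \<open>Programs for partial recursive functions relative to an auxiliary input alpha (a point of
Baire space).  A functional Phi from Baire space to Baire space is computable iff there is a
program e such that Phi(alpha)(n) is the value of e on input function alpha and input [n].\<close>

datatype rprog = RZero | RSucc | RProj nat | RQuery | RComp rprog "rprog list"
  | RPrimRec rprog rprog | RMin rprog

inductive reval :: "baire \<Rightarrow> rprog \<Rightarrow> nat list \<Rightarrow> nat \<Rightarrow> bool" where
  zero: "reval \<alpha> RZero xs 0"
| succ: "reval \<alpha> RSucc (x # xs) (Suc x)"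
| proj: "i < length xs \<Longrightarrow> reval \<alpha> (RProj i) xs (xs ! i)"
| orc: "reval \<alpha> RQuery (x # xs) (\<alpha> x)"
| comp: "length ys = length gs \<Longrightarrow> (\<forall>i < length gs. reval \<alpha> (gs ! i) xs (ys ! i))
          \<Longrightarrow> reval \<alpha> f ys z \<Longrightarrow> reval \<alpha> (RComp f gs) xs z"
| prec0: "reval \<alpha> g xs y \<Longrightarrow> reval \<alpha> (RPrimRec g h) (0 # xs) y"
| precS: "reval \<alpha> (RPrimRec g h) (n # xs) y \<Longrightarrow> reval \<alpha> h (n # y # xs) z
          \<Longrightarrow> reval \<alpha> (RPrimRec g h) (Suc n # xs) z"
| mini: "reval \<alpha> f (n # xs) 0 \<Longrightarrow> (\<forall>m < n. \<exists>y. reval \<alpha> f (m # xs) y \<and> 0 < y)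
          \<Longrightarrow> reval \<alpha> (RMin f) xs n"

definition comp_at :: "rprog \<Rightarrow> baire \<Rightarrow> baire \<Rightarrow> bool" where
  "comp_at e \<alpha> \<beta> \<longleftrightarrow> (\<forall>n. reval \<alpha> e [n] (\<beta> n))"

text \<open>A problem is given on the level of names: a domain of admissible input names and,
for each input name, the set of acceptable output names.\<close>
type_synonym problem = "baire set \<times> (baire \<Rightarrow> baire set)"

definition pdom :: "problem \<Rightarrow> baire set" where "pdom P = fst P"
definition psol :: "problem \<Rightarrow> baire \<Rightarrow> baire set" where "psol P = snd P"

definition realizer :: "problem \<Rightarrow> (baire \<Rightarrow> baire) \<Rightarrow> bool" where
  "realizer P G \<longleftrightarrow> (\<forall>p \<in> pdom P. G p \<in> psol P p)"

definition sW_le :: "problem \<Rightarrow> problem \<Rightarrow> bool" where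
  "sW_le f g \<longleftrightarrow> (\<exists>eP eQ. \<forall>G. realizer g G \<longrightarrow>
     (\<forall>p \<in> pdom f. \<exists>q r. comp_at eP p q \<and> q \<in> pdom g \<and> comp_at eQ (G q) r \<and> r \<in> psol f p))"

definition sW_equiv :: "problem \<Rightarrow> problem \<Rightarrow> bool" where
  "sW_equiv f g \<longleftrightarrow> sW_le f g \<and> sW_le g f"

text \<open>Finite strings are coded by list_encode.  A name of a closed set is the characteristic
function of a tree T (closed under prefixes); the named set is the set of paths [T].\<close>
definition tree_of :: "baire \<Rightarrow> nat list set" where
  "tree_of p = {s. p (list_encode s) \<noteq> 0}"

definition is_tree_name :: "baire \<Rightarrow> bool" where
  "is_tree_name p \<longleftrightarrow> (\<forall>x. p x \<le> 1) \<and>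
     (\<forall>s t. s @ t \<in> tree_of p \<longrightarrow> s \<in> tree_of p)"

definition paths :: "nat list set \<Rightarrow> baire set" where
  "paths T = {x. \<forall>n. map x [0..<n] \<in> T}"

definition C_Baire :: problem where
  "C_Baire = ({p. is_tree_name p \<and> paths (tree_of p) \<noteq> {}}, \<lambda>p. paths (tree_of p))"

definition ramsey :: "baire set" where "ramsey = {f. strict_mono f}"

text \<open>A name of an open set enumerates a set of finite strictly increasing strings:
value 0 means "nothing enumerated", value k+1 enumerates the string coded by k.\<close>
definition enum_strings :: "baire \<Rightarrow> nat list set" where
  "enum_strings p = {list_decode (p n - 1) | n. 0 < p n}"

definition is_open_name :: "baire \<Rightarrow> bool" where
  "is_open_name p \<longleftrightarrow> (\<forall>s \<in> enum_strings p. sorted_wrt (<) s)"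

definition cone :: "nat list \<Rightarrow> baire set" where
  "cone s = {f \<in> ramsey. map f [0..<length s] = s}"

definition open_of :: "baire \<Rightarrow> baire set" where
  "open_of p = (\<Union>s \<in> enum_strings p. cone s)"

definition HS :: "baire set \<Rightarrow> baire set" where
  "HS P = {f \<in> ramsey. (\<forall>g \<in> ramsey. f \<circ> g \<in> P) \<or> (\<forall>g \<in> ramsey. f \<circ> g \<notin> P)}"

definition FindHS_Pi01 :: problem where
  "FindHS_Pi01 = ({p. is_open_name p \<and> HS (open_of p) - open_of p \<noteq> {}},
                  \<lambda>p. HS (open_of p) - open_of p)"

text \<open>Pairing of Baire-space elements: the pair of p and q is the interleaving.\<close>
definition pleft :: "baire \<Rightarrow> baire" where "pleft p = (\<lambda>n. p (2 * n))"
definition pright :: "baire \<Rightarrow> baire" where "pright p = (\<lambda>n. p (2 * n + 1))"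

definition is_clopen_name :: "baire \<Rightarrow> bool" where
  "is_clopen_name p \<longleftrightarrow> is_open_name (pleft p) \<and> is_open_name (pright p) \<and>
     open_of (pleft p) \<inter> open_of (pright p) = {} \<and>
     open_of (pleft p) \<union> open_of (pright p) = ramsey"

definition FindHS_Delta01 :: problem where
  "FindHS_Delta01 = ({p. is_clopen_name p \<and> HS (open_of (pleft p)) \<inter> open_of (pleft p) \<noteq> {}},
                     \<lambda>p. HS (open_of (pleft p)) \<inter> open_of (pleft p))"

end

theory Submission
  imports Defs
begin

definition cfun :: "nat \<Rightarrow> (baire \<Rightarrow> nat list \<Rightarrow> nat) \<Rightarrow> bool" where
  "cfun k F \<longleftrightarrow> (\<exists>e. \<forall>\<alpha> xs. length xs = k \<longrightarrow> reval \<alpha> e xs (F \<alpha> xs))"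

lemma cfun_cong: "cfun k F \<Longrightarrow> (\<And>\<alpha> xs. length xs = k \<Longrightarrow> F \<alpha> xs = G \<alpha> xs) \<Longrightarrow> cfun k G"
  unfolding cfun_def by metis

lemma cfun_zero: "cfun k (\<lambda>\<alpha> xs. 0)"
  unfolding cfun_def by (blast intro: reval.zero)

lemma cfun_proj: "i < k \<Longrightarrow> cfun k (\<lambda>\<alpha> xs. xs ! i)"
  unfolding cfun_def by (metis reval.proj)

lemma progs_exist:
  assumes "list_all (cfun k) Gs"
  shows "\<exists>es. length es = length Gs \<and> (\<forall>i<length Gs. \<forall>\<alpha> xs. length xs = k \<longrightarrow> reval \<alpha> (es!i) xs ((Gs!i) \<alpha> xs))"
  using assms
proof (induction Gs)
  case Nil
  then show ?case by auto
next
  case (Cons G Gs)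
  then obtain es where es: "length es = length Gs" "\<forall>i<length Gs. \<forall>\<alpha> xs. length xs = k \<longrightarrow> reval \<alpha> (es!i) xs ((Gs!i) \<alpha> xs)"
    by auto
  from Cons.prems obtain e where e: "\<forall>\<alpha> xs. length xs = k \<longrightarrow> reval \<alpha> e xs (G \<alpha> xs)"
    unfolding cfun_def by auto
  show ?case
    apply (rule exI[of _ "e # es"])
    using es e by (auto simp: nth_Cons split: nat.split)
qed

lemma cfun_comp:
  assumes "cfun m F" "list_all (cfun k) Gs" "length Gs = m"
  shows "cfun k (\<lambda>\<alpha> xs. F \<alpha> (map (\<lambda>G. G \<alpha> xs) Gs))"
proof -
  obtain e where e: "\<forall>\<alpha> xs. length xs = m \<longrightarrow> reval \<alpha> e xs (F \<alpha> xs)"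
    using assms(1) unfolding cfun_def by auto
  obtain es where es: "length es = length Gs" "\<forall>i<length Gs. \<forall>\<alpha> xs. length xs = k \<longrightarrow> reval \<alpha> (es!i) xs ((Gs!i) \<alpha> xs)"
    using progs_exist[OF assms(2)] by auto
  show ?thesis unfolding cfun_def
    apply (rule exI[of _ "RComp e es"])
    apply (intro allI impI)
    apply (rule reval.comp[where ys="map (\<lambda>G. G _ _) Gs"])
    using es e assms(3) by auto
qed

lemma cfun_comp1: "cfun 1 F \<Longrightarrow> cfun k G \<Longrightarrow> cfun k (\<lambda>\<alpha> xs. F \<alpha> [G \<alpha> xs])"
  using cfun_comp[of 1 F k "[G]"] by simp

lemma cfun_comp2: "cfun 2 F \<Longrightarrow> cfun k G \<Longrightarrow> cfun k H \<Longrightarrow> cfun k (\<lambda>\<alpha> xs. F \<alpha> [G \<alpha> xs, H \<alpha> xs])"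
  using cfun_comp[of 2 F k "[G, H]"] by simp

lemma cfun_comp3: "cfun 3 F \<Longrightarrow> cfun k G \<Longrightarrow> cfun k H \<Longrightarrow> cfun k I \<Longrightarrow> cfun k (\<lambda>\<alpha> xs. F \<alpha> [G \<alpha> xs, H \<alpha> xs, I \<alpha> xs])"
  using cfun_comp[of 3 F k "[G, H, I]"] by (simp add: numeral_3_eq_3)

lemma cfun_succ: "cfun k F \<Longrightarrow> cfun k (\<lambda>\<alpha> xs. Suc (F \<alpha> xs))"
proof -
  have "cfun 1 (\<lambda>\<alpha> xs. Suc (hd xs))"
    unfolding cfun_def apply (rule exI[of _ RSucc]) 
    by (auto simp: length_Suc_conv intro: reval.succ)
  then show "cfun k F \<Longrightarrow> ?thesis" using cfun_comp1 by fastforce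
qed

lemma cfun_query: "cfun k F \<Longrightarrow> cfun k (\<lambda>\<alpha> xs. \<alpha> (F \<alpha> xs))"
proof -
  have "cfun 1 (\<lambda>\<alpha> xs. \<alpha> (hd xs))"
    unfolding cfun_def apply (rule exI[of _ RQuery]) 
    by (auto simp: length_Suc_conv intro: reval.orc)
  then show "cfun k F \<Longrightarrow> ?thesis" using cfun_comp1 by fastforce
qed

lemma cfun_const: "cfun k (\<lambda>\<alpha> xs. c)"
  by (induction c) (auto intro: cfun_zero cfun_succ)

lemma cfun_prec:
  assumes "cfun k G" "cfun (Suc (Suc k)) H"
  shows "cfun (Suc k) (\<lambda>\<alpha> xs. rec_nat (G \<alpha> (tl xs)) (\<lambda>n y. H \<alpha> (n # y # tl xs)) (hd xs))"
proof -
  obtain g where g: "\<forall>\<alpha> xs. length xs = k \<longrightarrow> reval \<alpha> g xs (G \<alpha> xs)"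
    using assms(1) unfolding cfun_def by auto
  obtain h where h: "\<forall>\<alpha> xs. length xs = Suc (Suc k) \<longrightarrow> reval \<alpha> h xs (H \<alpha> xs)"
    using assms(2) unfolding cfun_def by auto
  have "reval \<alpha> (RPrimRec g h) (n # xs) (rec_nat (G \<alpha> xs) (\<lambda>n y. H \<alpha> (n # y # xs)) n)"
    if "length xs = k" for \<alpha> xs n
    using that
    by (induction n) (auto intro!: reval.prec0 reval.precS g[rule_format] h[rule_format])
  then show ?thesis unfolding cfun_def
    by (intro exI[of _ "RPrimRec g h"]) (auto simp: length_Suc_conv)
qed

lemma cfun_mini:
  assumes "cfun (Suc k) G" "\<And>\<alpha> xs. length xs = k \<Longrightarrow> \<exists>n. G \<alpha> (n # xs) = 0"
  shows "cfun k (\<lambda>\<alpha> xs. LEAST n. G \<alpha> (n # xs) = 0)"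
proof -
  obtain g where g: "\<forall>\<alpha> xs. length xs = Suc k \<longrightarrow> reval \<alpha> g xs (G \<alpha> xs)"
    using assms(1) unfolding cfun_def by auto
  show ?thesis unfolding cfun_def
  proof (intro exI[of _ "RMin g"] allI impI)
    fix \<alpha> :: baire and xs :: "nat list" assume l: "length xs = k"
    obtain n :: nat where "G \<alpha> (n # xs) = 0" using assms(2)[OF l] by auto
    then have "G \<alpha> ((LEAST n. G \<alpha> (n # xs) = 0) # xs) = 0" by (rule LeastI)
    moreover have "\<forall>m<(LEAST n. G \<alpha> (n # xs) = 0). G \<alpha> (m # xs) \<noteq> 0"
      using not_less_Least by blast
    ultimately show "reval \<alpha> (RMin g) xs (LEAST n. G \<alpha> (n # xs) = 0)"
      apply (intro reval.mini)
      using g l by (metis length_Cons, metis gr0I length_Cons)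
  qed
qed

lemma map_nth_upt_drop: "length ys = n \<Longrightarrow> map (nth ys) [a..<n] = drop a ys"
  by (rule nth_equalityI) auto

lemma map_nth_len: "length xs = k \<Longrightarrow> map (\<lambda>i. xs ! i) [0..<k] = xs"
  using map_nth[of xs] by (simp add: comp_def)

lemma cfun_args:
  assumes "cfun m F" "\<forall>i\<in>set is. i < k" "length is = m"
  shows "cfun k (\<lambda>\<alpha> xs. F \<alpha> (map (nth xs) is))"
proof -
  have "list_all (cfun k) (map (\<lambda>i \<alpha> xs. xs ! i) is)"
    using assms(2) by (auto simp: list_all_iff intro: cfun_proj)
  from cfun_comp[OF assms(1) this] assms(3) show ?thesis by (simp add: comp_def)
qed

lemma cfun_cong': "cfun k F \<Longrightarrow> k = k' \<Longrightarrow> (\<And>\<alpha> xs. length xs = k' \<Longrightarrow> F \<alpha> xs = G \<alpha> xs) \<Longrightarrow> cfun k' G"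
  using cfun_cong by blast

lemma rec_add: "rec_nat b (\<lambda>n y. Suc y) a = a + b" by (induct a) auto
lemma rec_pred: "rec_nat 0 (\<lambda>n y. n) a = a - 1" by (induct a) auto
lemma rec_sub: "rec_nat b (\<lambda>n y. y - Suc 0) a = b - a" by (induct a) auto
lemma rec_cond: "rec_nat b (\<lambda>n y. c) a = (if a = 0 then b else c)" by (cases a) auto

lemma len2: "length xs = 2 \<longleftrightarrow> (\<exists>a b. xs = [a, b])"
  by (auto simp: numeral_2_eq_2 length_Suc_conv)
lemma len3: "length xs = 3 \<longleftrightarrow> (\<exists>a b c. xs = [a, b, c])"
  by (auto simp: numeral_3_eq_3 length_Suc_conv)
lemma len1: "length xs = 1 \<longleftrightarrow> (\<exists>a. xs = [a])"
  by (auto simp: length_Suc_conv)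

lemma add2: "cfun 2 (\<lambda>\<alpha> xs. xs!0 + xs!1)"
proof -
  have "cfun (Suc 1) (\<lambda>\<alpha> xs. rec_nat ((tl xs)!0) (\<lambda>n y. Suc ((n # y # tl xs)!1)) (hd xs))"
    by (rule cfun_prec[where G="\<lambda>\<alpha> ys. ys!0" and H="\<lambda>\<alpha> ys. Suc (ys!1)"])
       (auto intro: cfun_proj cfun_succ)
  then show ?thesis by (rule cfun_cong') (auto simp: len2 rec_add)
qed

lemma cfun_add: "cfun k F \<Longrightarrow> cfun k G \<Longrightarrow> cfun k (\<lambda>\<alpha> xs. F \<alpha> xs + G \<alpha> xs)"
  using cfun_comp2[OF add2] by simp

lemma pred1: "cfun 1 (\<lambda>\<alpha> xs. xs!0 - 1)"
proof -
  have "cfun (Suc 0) (\<lambda>\<alpha> xs. rec_nat 0 (\<lambda>n y. (n # y # tl xs)!0) (hd xs))"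
    by (rule cfun_prec[where G="\<lambda>\<alpha> ys. 0" and H="\<lambda>\<alpha> ys. ys!0"])
       (auto intro: cfun_proj cfun_zero)
  then show ?thesis by (rule cfun_cong') (auto simp: length_Suc_conv rec_pred)
qed

lemma cfun_pred: "cfun k F \<Longrightarrow> cfun k (\<lambda>\<alpha> xs. F \<alpha> xs - 1)"
  using cfun_comp1[OF pred1] by simp

lemma sub2: "cfun 2 (\<lambda>\<alpha> xs. xs!1 - xs!0)"
proof -
  have "cfun (Suc 1) (\<lambda>\<alpha> xs. rec_nat ((tl xs)!0) (\<lambda>n y. (n # y # tl xs)!1 - 1) (hd xs))"
    by (rule cfun_prec[where G="\<lambda>\<alpha> ys. ys!0" and H="\<lambda>\<alpha> ys. ys!1 - 1"])
       (intro cfun_proj cfun_pred; simp)+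
  then show ?thesis by (rule cfun_cong') (auto simp: len2 rec_sub)
qed

lemma cfun_sub: "cfun k F \<Longrightarrow> cfun k G \<Longrightarrow> cfun k (\<lambda>\<alpha> xs. F \<alpha> xs - G \<alpha> xs)"
  using cfun_comp2[OF sub2, of k G F] by simp

lemma cond3: "cfun 3 (\<lambda>\<alpha> xs. if xs!0 = 0 then xs!2 else xs!1)"
proof -
  have "cfun (Suc 2) (\<lambda>\<alpha> xs. rec_nat ((tl xs)!1) (\<lambda>n y. (n # y # tl xs)!2) (hd xs))"
    by (rule cfun_prec[where G="\<lambda>\<alpha> ys. ys!1" and H="\<lambda>\<alpha> ys. ys!2"])
       (auto intro: cfun_proj)
  then show ?thesis by (rule cfun_cong') (auto simp: len3 rec_cond)
qed

definition cpred :: "nat \<Rightarrow> (baire \<Rightarrow> nat list \<Rightarrow> bool) \<Rightarrow> bool" where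
  "cpred k P \<longleftrightarrow> cfun k (\<lambda>\<alpha> xs. if P \<alpha> xs then 1 else 0)"

lemma cfun_if: "cpred k P \<Longrightarrow> cfun k F \<Longrightarrow> cfun k G \<Longrightarrow> cfun k (\<lambda>\<alpha> xs. if P \<alpha> xs then F \<alpha> xs else G \<alpha> xs)"
  unfolding cpred_def
  by (rule cfun_cong[OF cfun_comp3[OF cond3, of k "\<lambda>\<alpha> xs. if P \<alpha> xs then 1 else 0" F G]]) auto

lemma cpred_cong: "cpred k P \<Longrightarrow> (\<And>\<alpha> xs. length xs = k \<Longrightarrow> P \<alpha> xs = Q \<alpha> xs) \<Longrightarrow> cpred k Q"
  unfolding cpred_def by (erule cfun_cong) simp

lemma cpred_less: "cfun k F \<Longrightarrow> cfun k G \<Longrightarrow> cpred k (\<lambda>\<alpha> xs. F \<alpha> xs < G \<alpha> xs)"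
  unfolding cpred_def
  by (rule cfun_cong[OF cfun_comp3[OF cond3, of k "\<lambda>\<alpha> xs. G \<alpha> xs - F \<alpha> xs" "\<lambda>\<alpha> xs. 1" "\<lambda>\<alpha> xs. 0"]])
     (auto simp add: cfun_sub cfun_const)

lemma cpred_not: "cpred k P \<Longrightarrow> cpred k (\<lambda>\<alpha> xs. \<not> P \<alpha> xs)"
  unfolding cpred_def
  by (rule cfun_cong[OF cfun_if[of k P "\<lambda>_ _. 0" "\<lambda>_ _. 1"]]) (auto simp add: cpred_def cfun_const)

lemma cpred_and: "cpred k P \<Longrightarrow> cpred k Q \<Longrightarrow> cpred k (\<lambda>\<alpha> xs. P \<alpha> xs \<and> Q \<alpha> xs)"
  unfolding cpred_def
  by (rule cfun_cong[OF cfun_if[of k P "\<lambda>\<alpha> xs. if Q \<alpha> xs then 1 else 0" "\<lambda>_ _. 0"]])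
     (auto simp add: cpred_def cfun_const)

lemma cpred_or: "cpred k P \<Longrightarrow> cpred k Q \<Longrightarrow> cpred k (\<lambda>\<alpha> xs. P \<alpha> xs \<or> Q \<alpha> xs)"
  unfolding cpred_def
  by (rule cfun_cong[OF cfun_if[of k P "\<lambda>_ _. 1" "\<lambda>\<alpha> xs. if Q \<alpha> xs then 1 else 0"]])
     (auto simp add: cpred_def cfun_const)

lemma cpred_imp: "cpred k P \<Longrightarrow> cpred k Q \<Longrightarrow> cpred k (\<lambda>\<alpha> xs. P \<alpha> xs \<longrightarrow> Q \<alpha> xs)"
  unfolding cpred_def
  by (rule cfun_cong[OF cfun_if[of k P "\<lambda>\<alpha> xs. if Q \<alpha> xs then 1 else 0" "\<lambda>_ _. 1"]])
     (auto simp add: cpred_def cfun_const)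

lemma cpred_eq: "cfun k F \<Longrightarrow> cfun k G \<Longrightarrow> cpred k (\<lambda>\<alpha> xs. F \<alpha> xs = G \<alpha> xs)"
proof -
  assume a: "cfun k F" "cfun k G"
  have "cpred k (\<lambda>\<alpha> xs. \<not> F \<alpha> xs < G \<alpha> xs \<and> \<not> G \<alpha> xs < F \<alpha> xs)"
    by (intro cpred_and cpred_not cpred_less a)
  then show ?thesis by (rule cpred_cong) auto
qed

lemma rec_ball: "rec_nat 1 (\<lambda>n y. if P n then y else 0) c = (if \<forall>i<c. P i then 1 else (0::nat))"
  by (induct c) (auto simp: less_Suc_eq)

lemma cpred_ball:
  assumes B: "cfun k B" and P: "cpred (Suc k) P"
  shows "cpred k (\<lambda>\<alpha> xs. \<forall>i<B \<alpha> xs. P \<alpha> (i # xs))"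
proof -
  have P2: "cpred (Suc (Suc k)) (\<lambda>\<alpha> ys. P \<alpha> (map (nth ys) (0 # [2..<Suc (Suc k)])))"
    using cfun_args[OF P[unfolded cpred_def], of "0 # [2..<Suc (Suc k)]" "Suc (Suc k)"]
    unfolding cpred_def by (simp del: upt_Suc)
  have "cfun (Suc (Suc k)) (\<lambda>\<alpha> ys. if P \<alpha> (map (nth ys) (0 # [2..<Suc (Suc k)])) then ys ! Suc 0 else 0)"
    by (rule cfun_if[OF P2]) (auto intro: cfun_proj cfun_const)
  from cfun_prec[OF cfun_const[of k 1] this]
  have R: "cfun (Suc k) (\<lambda>\<alpha> xs. if \<forall>i<hd xs. P \<alpha> (i # tl xs) then 1 else 0)"
    apply (rule cfun_cong)
    apply (clarsimp simp: length_Suc_conv map_nth_upt_drop simp del: upt_Suc)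
    unfolding nth_Cons_Suc nth_Cons_0
    apply (simp add: rec_ball[unfolded One_nat_def])
    done
  have "list_all (cfun k) (B # map (\<lambda>i \<alpha> xs. xs ! i) [0..<k])"
    using B by (auto simp: list_all_iff intro: cfun_proj)
  from cfun_comp[OF R this] show ?thesis
    unfolding cpred_def
    by (rule cfun_cong) (simp_all add: comp_def map_nth_len)
qed

lemma cpred_bex:
  assumes B: "cfun k B" and P: "cpred (Suc k) P"
  shows "cpred k (\<lambda>\<alpha> xs. \<exists>i<B \<alpha> xs. P \<alpha> (i # xs))"
proof -
  have "cpred k (\<lambda>\<alpha> xs. \<not> (\<forall>i<B \<alpha> xs. \<not> P \<alpha> (i # xs)))"
    by (intro cpred_not cpred_ball B P)
  then show ?thesis by (rule cpred_cong) auto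
qed

lemma cpred_True: "cpred k (\<lambda>_ _. True)"
  unfolding cpred_def by (simp add: cfun_const)

lemma rec_tri: "rec_nat 0 (\<lambda>n y. Suc (y + n)) a = triangle a"
  by (induct a) (auto simp: triangle_Suc)

lemma tri1: "cfun 1 (\<lambda>\<alpha> xs. triangle (xs!0))"
proof -
  have "cfun (Suc 0) (\<lambda>\<alpha> xs. rec_nat 0 (\<lambda>n y. (n # y # tl xs)!1 + Suc ((n # y # tl xs)!0)) (hd xs))"
    by (rule cfun_prec[where G="\<lambda>\<alpha> ys. 0" and H="\<lambda>\<alpha> ys. ys!1 + Suc (ys!0)"])
       (intro cfun_add cfun_succ cfun_proj cfun_zero; simp)+
  then show ?thesis unfolding nth_Cons_0 One_nat_def nth_Cons_Suc
    by (rule cfun_cong') (auto simp: length_Suc_conv rec_tri)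
qed

lemma cfun_tri: "cfun k F \<Longrightarrow> cfun k (\<lambda>\<alpha> xs. triangle (F \<alpha> xs))"
  using cfun_comp1[OF tri1] by simp

lemma triangle_mono: "a \<le> b \<Longrightarrow> triangle a \<le> triangle b"
  unfolding triangle_def by (intro div_le_mono mult_le_mono) auto

definition pd_s :: "nat \<Rightarrow> nat" where "pd_s n = (LEAST s. n < triangle (Suc s))"
definition pfst :: "nat \<Rightarrow> nat" where "pfst n = n - triangle (pd_s n)"
definition psnd :: "nat \<Rightarrow> nat" where "psnd n = pd_s n - pfst n"

lemma prod_decode_eq: "prod_decode n = (pfst n, psnd n)"
proof -
  obtain x y where xy: "prod_decode n = (x, y)" by fastforce
  then have "n = prod_encode (x, y)" using prod_decode_inverse[of n] by simp
  then have n: "n = triangle (x + y) + x" by (simp add: prod_encode_def)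
  have s: "pd_s n = x + y" unfolding pd_s_def
  proof (rule Least_equality)
    show "n < triangle (Suc (x + y))" using n by (simp add: triangle_Suc)
  next
    fix s assume ns: "n < triangle (Suc s)"
    show "x + y \<le> s"
    proof (rule ccontr)
      assume "\<not> x + y \<le> s" then have "Suc s \<le> x + y" by simp
      then have "triangle (Suc s) \<le> triangle (x + y)" by (rule triangle_mono)
      then show False using ns n by simp
    qed
  qed
  show ?thesis using xy n s by (simp add: pfst_def psnd_def)
qed


lemma pds1: "cfun 1 (\<lambda>\<alpha> xs. pd_s (xs!0))"
proof -
  have "cfun (Suc 1) (\<lambda>\<alpha> ys. if ys!1 < triangle (Suc (ys!0)) then 0 else 1)"
    by (intro cfun_if cpred_less cfun_tri cfun_succ cfun_proj cfun_const; simp)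
  then have "cfun 1 (\<lambda>\<alpha> xs. LEAST n. (if (n # xs)!1 < triangle (Suc ((n # xs)!0)) then 0 else 1) = (0::nat))"
    apply (rule cfun_mini)
    apply (rule_tac x="xs!0" in exI)
    apply (auto simp: triangle_Suc)
    done
  then show ?thesis unfolding pd_s_def by (rule cfun_cong) simp
qed


lemma cfun_pds: "cfun k F \<Longrightarrow> cfun k (\<lambda>\<alpha> xs. pd_s (F \<alpha> xs))"
  using cfun_comp1[OF pds1] by simp

lemma cfun_pfst: "cfun k F \<Longrightarrow> cfun k (\<lambda>\<alpha> xs. pfst (F \<alpha> xs))"
  unfolding pfst_def by (intro cfun_sub cfun_tri cfun_pds)

lemma cfun_psnd: "cfun k F \<Longrightarrow> cfun k (\<lambda>\<alpha> xs. psnd (F \<alpha> xs))"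
  unfolding psnd_def by (intro cfun_sub cfun_pfst cfun_pds)

definition stepc :: "nat \<Rightarrow> nat" where "stepc c = (case c of 0 \<Rightarrow> 0 | Suc n \<Rightarrow> psnd n)"

lemma rec_step: "rec_nat 0 (\<lambda>n y. psnd n) c = stepc c"
  by (cases c) (auto simp: stepc_def)

lemma step1: "cfun 1 (\<lambda>\<alpha> xs. stepc (xs!0))"
proof -
  have "cfun (Suc 0) (\<lambda>\<alpha> xs. rec_nat 0 (\<lambda>n y. psnd ((n # y # tl xs)!0)) (hd xs))"
    by (rule cfun_prec[where G="\<lambda>\<alpha> ys. 0" and H="\<lambda>\<alpha> ys. psnd (ys!0)"])
       (intro cfun_psnd cfun_proj cfun_zero; simp)+
  then show ?thesis unfolding nth_Cons_0
    by (rule cfun_cong') (auto simp: length_Suc_conv rec_step)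
qed

lemma cfun_step: "cfun k F \<Longrightarrow> cfun k (\<lambda>\<alpha> xs. stepc (F \<alpha> xs))"
  using cfun_comp1[OF step1] by simp

definition tailc :: "nat \<Rightarrow> nat \<Rightarrow> nat" where "tailc c k = (stepc ^^ k) c"

lemma rec_tail: "rec_nat c (\<lambda>n y. stepc y) k = tailc c k"
  by (induct k) (auto simp: tailc_def)

lemma tail2: "cfun 2 (\<lambda>\<alpha> xs. tailc (xs!1) (xs!0))"
proof -
  have "cfun (Suc 1) (\<lambda>\<alpha> xs. rec_nat ((tl xs)!0) (\<lambda>n y. stepc ((n # y # tl xs)!1)) (hd xs))"
    by (rule cfun_prec[where G="\<lambda>\<alpha> ys. ys!0" and H="\<lambda>\<alpha> ys. stepc (ys!1)"])
       (intro cfun_step cfun_proj; simp)+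
  then show ?thesis unfolding nth_Cons_0 One_nat_def nth_Cons_Suc
    by (rule cfun_cong') (auto simp: len2 rec_tail)
qed

lemma cfun_tail: "cfun k F \<Longrightarrow> cfun k G \<Longrightarrow> cfun k (\<lambda>\<alpha> xs. tailc (F \<alpha> xs) (G \<alpha> xs))"
  using cfun_comp2[OF tail2, of k G F] by simp

definition lenc :: "nat \<Rightarrow> nat" where "lenc c = (LEAST k. tailc c k = 0)"
definition nthc :: "nat \<Rightarrow> nat \<Rightarrow> nat" where "nthc c i = pfst (tailc c i - 1)"

lemma psnd_enc: "psnd (prod_encode (a, b)) = b" and pfst_enc: "pfst (prod_encode (a, b)) = a"
  using prod_decode_eq[of "prod_encode (a, b)"] by (simp_all add: prod_encode_inverse)

lemma stepc_enc: "stepc (list_encode l) = list_encode (tl l)"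
  by (cases l) (auto simp: stepc_def psnd_enc)

lemma tailc_eq: "tailc c k = list_encode (drop k (list_decode c))"
proof (induct k)
  case 0 then show ?case by (simp add: tailc_def list_decode_inverse)
next
  case (Suc k)
  have "tailc c (Suc k) = stepc (tailc c k)" by (simp add: tailc_def)
  then show ?case using Suc by (simp add: stepc_enc drop_Suc tl_drop)
qed

lemma lenc_eq: "lenc c = length (list_decode c)"
  unfolding lenc_def tailc_eq
proof (rule Least_equality)
  show "list_encode (drop (length (list_decode c)) (list_decode c)) = 0" by simp
next
  fix y assume "list_encode (drop y (list_decode c)) = 0"
  then have "drop y (list_decode c) = []" using list_encode_eq[of _ "[]"] by simp
  then show "length (list_decode c) \<le> y" by simp
qed

lemma nthc_eq: "i < length (list_decode c) \<Longrightarrow> nthc c i = list_decode c ! i"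
  unfolding nthc_def tailc_eq
  by (simp add: Cons_nth_drop_Suc[symmetric] pfst_enc)

lemma cfun_lenc: "cfun k F \<Longrightarrow> cfun k (\<lambda>\<alpha> xs. lenc (F \<alpha> xs))"
proof -
  have "cfun 1 (\<lambda>\<alpha> xs. LEAST n. tailc ((n # xs)!1) ((n # xs)!0) = 0)"
    apply (rule cfun_mini)
     apply (intro cfun_tail cfun_proj; simp)
    apply (rule_tac x="length (list_decode (xs!0))" in exI)
    apply (auto simp: tailc_eq)
    done
  then have "cfun 1 (\<lambda>\<alpha> xs. lenc (xs!0))" unfolding lenc_def by (rule cfun_cong) simp
  then show "cfun k F \<Longrightarrow> ?thesis" using cfun_comp1 by fastforce
qed

lemma cfun_nthc: "cfun k F \<Longrightarrow> cfun k G \<Longrightarrow> cfun k (\<lambda>\<alpha> xs. nthc (F \<alpha> xs) (G \<alpha> xs))"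
  unfolding nthc_def by (intro cfun_pfst cfun_pred cfun_tail)

primrec osub :: "rprog \<Rightarrow> rprog \<Rightarrow> rprog" where
  "osub e RZero = RZero"
| "osub e RSucc = RSucc"
| "osub e (RProj i) = RProj i"
| "osub e RQuery = RComp e [RProj 0]"
| "osub e (RComp f gs) = RComp (osub e f) (map (osub e) gs)"
| "osub e (RPrimRec g h) = RPrimRec (osub e g) (osub e h)"
| "osub e (RMin f) = RMin (osub e f)"

lemma osub_correct:
  assumes "reval \<beta> c xs z" "\<forall>n. reval \<alpha> e [n] (\<beta> n)"
  shows "reval \<alpha> (osub e c) xs z"
  using assms
proof (induction rule: reval.induct)
  case (zero \<alpha> xs) then show ?case by (auto intro: reval.zero)
next
  case (succ \<alpha> x xs) then show ?case by (auto intro: reval.succ)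
next
  case (proj i xs \<alpha>) then show ?case by (auto intro: reval.proj)
next
  case (orc \<beta> x xs)
  show ?case
    apply simp
    apply (rule reval.comp[where ys="[x]"])
    using orc by (auto intro: reval.proj[of 0 "x # xs", simplified])
next
  case (comp ys gs \<beta> xs f z)
  show ?case
    apply simp
    apply (rule reval.comp[where ys=ys])
    using comp by auto
next
  case (prec0 \<beta> g xs y h) then show ?case by (auto intro: reval.prec0)
next
  case (precS \<beta> g h n xs y z) then show ?case by (auto intro: reval.precS)
next
  case (mini \<beta> f n xs) then show ?case by (auto intro!: reval.mini)
qed

lemma comp_at_comp: "comp_at e1 \<alpha> \<beta> \<Longrightarrow> comp_at e2 \<beta> \<gamma> \<Longrightarrow> comp_at (osub e1 e2) \<alpha> \<gamma>"
  unfolding comp_at_def using osub_correct by blast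

lemma sW_trans:
  assumes fg: "sW_le f g" and gh: "sW_le g h"
  shows "sW_le f h"
proof -
  obtain eP1 eQ1 where E1: "\<forall>G. realizer g G \<longrightarrow>
     (\<forall>p \<in> pdom f. \<exists>q r. comp_at eP1 p q \<and> q \<in> pdom g \<and> comp_at eQ1 (G q) r \<and> r \<in> psol f p)"
    using fg unfolding sW_le_def by blast
  obtain eP2 eQ2 where E2: "\<forall>H. realizer h H \<longrightarrow>
     (\<forall>p \<in> pdom g. \<exists>q r. comp_at eP2 p q \<and> q \<in> pdom h \<and> comp_at eQ2 (H q) r \<and> r \<in> psol g p)"
    using gh unfolding sW_le_def by blast
  have main: "\<exists>q r. comp_at (osub eP1 eP2) p q \<and> q \<in> pdom h \<and> comp_at (osub eQ2 eQ1) (H q) r \<and> r \<in> psol f p"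
    if H: "realizer h H" and p: "p \<in> pdom f" for H p
  proof -
    define S where "S q = (SOME qr. comp_at eP2 q (fst qr) \<and> fst qr \<in> pdom h \<and> comp_at eQ2 (H (fst qr)) (snd qr) \<and> snd qr \<in> psol g q)" for q
    have S: "comp_at eP2 q (fst (S q)) \<and> fst (S q) \<in> pdom h \<and> comp_at eQ2 (H (fst (S q))) (snd (S q)) \<and> snd (S q) \<in> psol g q"
      if qg: "q \<in> pdom g" for q
    proof -
      obtain q' r' where "comp_at eP2 q q' \<and> q' \<in> pdom h \<and> comp_at eQ2 (H q') r' \<and> r' \<in> psol g q"
        using E2[rule_format, OF H qg] by blast
      then have "\<exists>qr. comp_at eP2 q (fst qr) \<and> fst qr \<in> pdom h \<and> comp_at eQ2 (H (fst qr)) (snd qr) \<and> snd qr \<in> psol g q"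
        by (intro exI[of _ "(q', r')"]) simp
      then show ?thesis unfolding S_def by (rule someI_ex)
    qed
    have G: "realizer g (\<lambda>q. snd (S q))" unfolding realizer_def using S by blast
    obtain q r where qr: "comp_at eP1 p q" "q \<in> pdom g" "comp_at eQ1 (snd (S q)) r" "r \<in> psol f p"
      using E1[rule_format, OF G p] by blast
    have Sq: "comp_at eP2 q (fst (S q))" "fst (S q) \<in> pdom h" "comp_at eQ2 (H (fst (S q))) (snd (S q))"
      using S[OF qr(2)] by auto
    show ?thesis
      apply (rule exI[of _ "fst (S q)"])
      apply (rule exI[of _ r])
      using comp_at_comp[OF qr(1) Sq(1)] Sq(2) comp_at_comp[OF Sq(3) qr(3)] qr(4) by simp
  qed
  show ?thesis unfolding sW_le_def
    apply (rule exI[of _ "osub eP1 eP2"])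
    apply (rule exI[of _ "osub eQ2 eQ1"])
    using main by simp
qed

lemma sW_le_intro:
  assumes A: "cfun 1 A" and B: "cfun 1 B"
    and H: "\<And>p. p \<in> pdom f \<Longrightarrow> (\<lambda>n. A p [n]) \<in> pdom g \<and> (\<forall>y \<in> psol g (\<lambda>n. A p [n]). (\<lambda>n. B y [n]) \<in> psol f p)"
  shows "sW_le f g"
proof -
  obtain a where a: "\<forall>\<alpha> xs. length xs = 1 \<longrightarrow> reval \<alpha> a xs (A \<alpha> xs)" using A unfolding cfun_def by blast
  obtain b where b: "\<forall>\<alpha> xs. length xs = 1 \<longrightarrow> reval \<alpha> b xs (B \<alpha> xs)" using B unfolding cfun_def by blast
  have ca: "comp_at a p (\<lambda>n. A p [n])" for p unfolding comp_at_def using a by simp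
  have cb: "comp_at b y (\<lambda>n. B y [n])" for y unfolding comp_at_def using b by simp
  have main: "\<exists>q r. comp_at a p q \<and> q \<in> pdom g \<and> comp_at b (G q) r \<and> r \<in> psol f p"
    if G: "realizer g G" and p: "p \<in> pdom f" for G p
  proof -
    have "G (\<lambda>n. A p [n]) \<in> psol g (\<lambda>n. A p [n])" using G H[OF p] unfolding realizer_def by blast
    then have "(\<lambda>n. B (G (\<lambda>n. A p [n])) [n]) \<in> psol f p" using H[OF p] by blast
    then show ?thesis using ca[of p] cb[of "G (\<lambda>n. A p [n])"] H[OF p] by blast
  qed
  show ?thesis unfolding sW_le_def
    apply (rule exI[of _ a])
    apply (rule exI[of _ b])
    using main by simp
qed

lemma cpred_cong': "cpred k P \<Longrightarrow> k = k' \<Longrightarrow> (\<And>\<alpha> xs. length xs = k' \<Longrightarrow> P \<alpha> xs = Q \<alpha> xs) \<Longrightarrow> cpred k' Q"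
  using cpred_cong by blast

lemma cfun_proj0: "cfun (Suc k) (\<lambda>\<alpha> xs. xs!0)" by (rule cfun_proj) simp


lemma ramsey_comp: "f \<in> ramsey \<Longrightarrow> g \<in> ramsey \<Longrightarrow> f \<circ> g \<in> ramsey"
  unfolding ramsey_def strict_mono_def by auto

lemma id_ramsey: "id \<in> ramsey"
  unfolding ramsey_def by (simp add: strict_mono_def)

lemma cone_ramsey: "cone s \<subseteq> ramsey" unfolding cone_def by auto

lemma open_ramsey: "open_of p \<subseteq> ramsey" unfolding open_of_def using cone_ramsey by auto

lemma HS_out: "f \<in> HS P \<Longrightarrow> f \<notin> P \<Longrightarrow> g \<in> ramsey \<Longrightarrow> f \<circ> g \<notin> P"
  unfolding HS_def using id_ramsey by fastforce

lemma HS_in: "f \<in> HS P \<Longrightarrow> f \<in> P \<Longrightarrow> g \<in> ramsey \<Longrightarrow> f \<circ> g \<in> P"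
  unfolding HS_def using id_ramsey by fastforce

lemma HS_ramsey: "f \<in> HS P \<Longrightarrow> f \<in> ramsey" unfolding HS_def by auto

lemma clopen_HS:
  assumes "is_clopen_name p"
  shows "HS (open_of (pright p)) - open_of (pright p) = HS (open_of (pleft p)) \<inter> open_of (pleft p)"
proof -
  let ?L = "open_of (pleft p)" and ?R = "open_of (pright p)"
  have R: "\<And>h. h \<in> ramsey \<Longrightarrow> h \<in> ?R \<longleftrightarrow> h \<notin> ?L"
    using assms unfolding is_clopen_name_def by blast
  have "HS ?R = HS ?L" unfolding HS_def using R ramsey_comp by blast
  then show ?thesis using R HS_ramsey by blast
qed

lemma red_A: "sW_le FindHS_Delta01 FindHS_Pi01"
proof (rule sW_le_intro[where A="\<lambda>\<alpha> xs. \<alpha> (xs!0 + xs!0 + 1)" and B="\<lambda>\<alpha> xs. \<alpha> (xs!0)"])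
  show "cfun 1 (\<lambda>\<alpha> xs. \<alpha> (xs!0 + xs!0 + 1))"
    by (intro cfun_query cfun_add cfun_proj cfun_const; simp)
  show "cfun 1 (\<lambda>\<alpha> xs. \<alpha> (xs!0))"
    by (intro cfun_query cfun_proj; simp)
next
  fix p assume p: "p \<in> pdom FindHS_Delta01"
  have e: "(\<lambda>n. p ([n] ! 0 + [n] ! 0 + 1)) = pright p" unfolding pright_def by (auto simp: mult_2)
  have c: "is_clopen_name p" and ne: "HS (open_of (pleft p)) \<inter> open_of (pleft p) \<noteq> {}"
    using p unfolding FindHS_Delta01_def pdom_def by auto
  show "(\<lambda>n. p ([n] ! 0 + [n] ! 0 + 1)) \<in> pdom FindHS_Pi01 \<and>
        (\<forall>y\<in>psol FindHS_Pi01 (\<lambda>n. p ([n] ! 0 + [n] ! 0 + 1)). (\<lambda>n. y ([n] ! 0)) \<in> psol FindHS_Delta01 p)"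
    unfolding e using c ne clopen_HS[OF c]
    by (auto simp: FindHS_Pi01_def FindHS_Delta01_def pdom_def psol_def is_clopen_name_def)
qed

definition treeP :: "baire \<Rightarrow> nat \<Rightarrow> bool" where
  "treeP p c \<longleftrightarrow> sorted_wrt (<) (list_decode c) \<and>
     (\<forall>n<length (list_decode c). 0 < p n \<longrightarrow> \<not> set (list_decode (p n - 1)) \<subseteq> set (list_decode c))"

lemma treeP_eq: "treeP p c \<longleftrightarrow>
   (\<forall>j<lenc c. \<forall>i<j. nthc c i < nthc c j) \<and>
   (\<forall>n<lenc c. 0 < p n \<longrightarrow> \<not> (\<forall>i<lenc (p n - 1). \<exists>j<lenc c. nthc (p n - 1) i = nthc c j))"
proof -
  have s: "sorted_wrt (<) (list_decode c) \<longleftrightarrow> (\<forall>j<lenc c. \<forall>i<j. nthc c i < nthc c j)"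
    unfolding sorted_wrt_iff_nth_less lenc_eq by (auto simp: nthc_eq)
  have t0: "set t \<subseteq> set s \<longleftrightarrow> (\<forall>i<length t. \<exists>j<length s. t ! i = s ! j)" for t s :: "nat list"
  proof
    assume "set t \<subseteq> set s"
    then show "\<forall>i<length t. \<exists>j<length s. t ! i = s ! j"
      by (metis in_set_conv_nth nth_mem subsetD)
  next
    assume a: "\<forall>i<length t. \<exists>j<length s. t ! i = s ! j"
    show "set t \<subseteq> set s"
    proof
      fix v assume "v \<in> set t"
      then obtain i where "i < length t" "v = t ! i" by (auto simp: in_set_conv_nth)
      then show "v \<in> set s" using a by (metis nth_mem)
    qed
  qed
  have t: "set t \<subseteq> set (list_decode c) \<longleftrightarrow> (\<forall>i<length t. \<exists>j<lenc c. t ! i = nthc c j)" for t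
  proof -
    have "\<forall>j<length (list_decode c). nthc c j = list_decode c ! j" using nthc_eq by blast
    then show ?thesis unfolding t0 lenc_eq by metis
  qed
  have u: "(\<forall>i<lenc d. \<exists>j<lenc c. nthc d i = nthc c j) \<longleftrightarrow> (\<forall>i<length (list_decode d). \<exists>j<lenc c. list_decode d ! i = nthc c j)" for d
    by (auto simp: lenc_eq nthc_eq)
  show ?thesis unfolding treeP_def s t u by (simp add: lenc_eq)
qed

lemma cfun_treeP: "cpred 1 (\<lambda>\<alpha> xs. treeP \<alpha> (xs!0))"
proof -
  have S3: "cpred (Suc (Suc (Suc 0))) (\<lambda>\<alpha> ys. nthc (ys!2) (ys!0) < nthc (ys!2) (ys!1))"
    by (intro cpred_less cfun_nthc cfun_proj; simp)
  have S2: "cpred (Suc (Suc 0)) (\<lambda>\<alpha> ys. \<forall>i<ys!0. nthc (ys!1) i < nthc (ys!1) (ys!0))"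
    by (rule cpred_cong'[OF cpred_ball[OF cfun_proj0 S3]]) auto
  have S1: "cpred 1 (\<lambda>\<alpha> ys. \<forall>j<lenc (ys!0). \<forall>i<j. nthc (ys!0) i < nthc (ys!0) j)"
    by (rule cpred_cong'[OF cpred_ball[OF cfun_lenc[OF cfun_proj0] S2]]) auto
  have T4: "cpred (Suc (Suc (Suc (Suc 0)))) (\<lambda>\<alpha> ys. nthc (\<alpha> (ys!2) - 1) (ys!1) = nthc (ys!3) (ys!0))"
    by (intro cpred_eq cfun_nthc cfun_pred cfun_query cfun_proj; simp)
  have T3: "cpred (Suc (Suc (Suc 0))) (\<lambda>\<alpha> ys. \<exists>j<lenc (ys!2). nthc (\<alpha> (ys!1) - 1) (ys!0) = nthc (ys!2) j)"
    by (rule cpred_cong'[OF cpred_bex[OF cfun_lenc[OF cfun_proj[of 2]] T4]]) auto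
  have T2: "cpred (Suc (Suc 0)) (\<lambda>\<alpha> ys. 0 < \<alpha> (ys!0) \<longrightarrow> \<not> (\<forall>i<lenc (\<alpha> (ys!0) - 1). \<exists>j<lenc (ys!1). nthc (\<alpha> (ys!0) - 1) i = nthc (ys!1) j))"
    apply (intro cpred_imp cpred_less cfun_const cfun_query cfun_proj0 cpred_not)
    apply (rule cpred_cong'[OF cpred_ball[OF cfun_lenc[OF cfun_pred[OF cfun_query[OF cfun_proj0]]] T3]])
    apply auto
    done
  have T1: "cpred 1 (\<lambda>\<alpha> ys. \<forall>n<lenc (ys!0). 0 < \<alpha> n \<longrightarrow> \<not> (\<forall>i<lenc (\<alpha> n - 1). \<exists>j<lenc (ys!0). nthc (\<alpha> n - 1) i = nthc (ys!0) j))"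
    by (rule cpred_cong'[OF cpred_ball[OF cfun_lenc[OF cfun_proj0] T2]]) auto
  show ?thesis unfolding treeP_eq by (rule cpred_and[OF S1 T1])
qed

lemma map_eq_nth: "map h [0..<length s] = s \<longleftrightarrow> (\<forall>k<length s. h k = s!k)"
proof
  assume "map h [0..<length s] = s"
  then show "\<forall>k<length s. h k = s!k" by (metis add_0 diff_zero nth_map_upt)
next
  assume "\<forall>k<length s. h k = s!k"
  then show "map h [0..<length s] = s" by (intro nth_equalityI) auto
qed

lemma cone_mem: "h \<in> cone s \<longleftrightarrow> h \<in> ramsey \<and> (\<forall>k<length s. h k = s!k)"
  unfolding cone_def map_eq_nth by blast

lemma open_mem: "h \<in> open_of p \<longleftrightarrow> (\<exists>s\<in>enum_strings p. h \<in> cone s)"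
  unfolding open_of_def by blast

lemma enum_mem: "s \<in> enum_strings p \<longleftrightarrow> (\<exists>n. 0 < p n \<and> s = list_decode (p n - 1))"
  unfolding enum_strings_def by blast

lemma ix_exists:
  fixes f :: "nat \<Rightarrow> nat" and s :: "nat list"
  assumes f: "strict_mono f" and s: "sorted_wrt (<) s" and sub: "set s \<subseteq> range f"
  shows "\<exists>g. strict_mono g \<and> (\<forall>k<length s. f (g k) = s!k)"
proof -
  define ix where "ix v = (SOME j. f j = v)" for v
  have ix: "v \<in> range f \<Longrightarrow> f (ix v) = v" for v unfolding ix_def by (metis (mono_tags) imageE someI)
  define g where "g k = (if k < length s then ix (s!k) else ix (last s) + k)" for k
  have fg: "k < length s \<Longrightarrow> f (g k) = s!k" for k
  proof -
    assume k: "k < length s"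
    then have "s ! k \<in> range f" using sub nth_mem by blast
    then show ?thesis unfolding g_def using k ix by simp
  qed
  have lt: "g k < g k'" if "k < k'" "k' < length s" for k k'
  proof -
    have "s!k < s!k'" using s that sorted_wrt_iff_nth_less by auto
    then have "f (g k) < f (g k')" using fg that by auto
    then show ?thesis using f strict_mono_less by blast
  qed
  have le_last: "g k \<le> ix (last s)" if k: "k < length s" for k
  proof -
    have ne: "s \<noteq> []" using k by auto
    have e: "g (length s - 1) = ix (last s)" using ne by (simp add: g_def last_conv_nth)
    show ?thesis
    proof (cases "k = length s - 1")
      case True then show ?thesis using e by simp
    next
      case False then have "k < length s - 1" using k by simp
      then have "g k < g (length s - 1)" using lt[of k "length s - 1"] ne by simp
      then show ?thesis using e by simp
    qed
  qed
  have "strict_mono g"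
  proof (rule strict_monoI)
    fix a b :: nat assume ab: "a < b"
    show "g a < g b"
    proof (cases "b < length s")
      case True then show ?thesis using lt ab by auto
    next
      case False
      then have gb: "g b = ix (last s) + b" by (simp add: g_def)
      show ?thesis
      proof (cases "a < length s")
        case True then show ?thesis using le_last[OF True] gb ab by auto
      next
        case False then show ?thesis using gb ab by (simp add: g_def)
      qed
    qed
  qed
  then show ?thesis using fg by blast
qed

lemma tree_mem_q: "s \<in> tree_of (\<lambda>n. if treeP p n then 1 else 0) \<longleftrightarrow>
   sorted_wrt (<) s \<and> (\<forall>n<length s. 0 < p n \<longrightarrow> \<not> set (list_decode (p n - 1)) \<subseteq> set s)"
  unfolding tree_of_def treeP_def by simp

lemma treeB_tree: "is_tree_name (\<lambda>n. if treeP p n then 1 else 0 :: nat)"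
  unfolding is_tree_name_def
proof (intro conjI allI impI)
  let ?q = "\<lambda>n. if treeP p n then 1 else 0 :: nat"
  let ?E = "\<lambda>n. list_decode (p n - 1)"
  fix x show "?q x \<le> 1" by simp
next
  let ?q = "\<lambda>n. if treeP p n then 1 else 0 :: nat"
  let ?E = "\<lambda>n. list_decode (p n - 1)"
  fix s t assume st: "s @ t \<in> tree_of ?q"
  then have a: "sorted_wrt (<) (s @ t)"
    and b: "\<forall>n<length (s @ t). 0 < p n \<longrightarrow> \<not> set (?E n) \<subseteq> set (s @ t)"
    unfolding tree_mem_q by blast+
  show "s \<in> tree_of ?q" unfolding tree_mem_q
  proof (intro conjI allI impI notI)
    show "sorted_wrt (<) s" using a sorted_wrt_append by blast
  next
    fix n assume n: "n < length s" "0 < p n" "set (?E n) \<subseteq> set s"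
    then show False using b[rule_format, of n] by auto
  qed
qed

lemma treeB_paths_sub:
  assumes x: "x \<in> paths (tree_of (\<lambda>n. if treeP p n then 1 else 0 :: nat))"
  shows "x \<in> HS (open_of p) - open_of p"
proof -
  let ?E = "\<lambda>n. list_decode (p n - 1)"
  have T: "sorted_wrt (<) (map x [0..<N]) \<and> (\<forall>n<N. 0 < p n \<longrightarrow> \<not> set (?E n) \<subseteq> set (map x [0..<N]))" for N
    using x unfolding paths_def tree_mem_q by simp
  have sm: "strict_mono x"
  proof (rule strict_monoI)
    fix i j :: nat
    assume ij: "i < j"
    have "\<forall>a b. a < b \<longrightarrow> b < length (map x [0..<Suc j]) \<longrightarrow> map x [0..<Suc j] ! a < map x [0..<Suc j] ! b"
      using T[of "Suc j"] unfolding sorted_wrt_iff_nth_less by blast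
    from this[rule_format, of i j] ij have "map x [0..<Suc j] ! i < map x [0..<Suc j] ! j"
      by (simp del: upt_Suc)
    then show "x i < x j" using ij by (simp del: upt_Suc add: nth_map_upt)
  qed
  have xr: "x \<in> ramsey" using sm by (simp add: ramsey_def)
  have out: "x \<circ> g \<notin> open_of p" if g: "g \<in> ramsey" for g
  proof
    assume "x \<circ> g \<in> open_of p"
    then obtain s where s: "s \<in> enum_strings p" "x \<circ> g \<in> cone s" unfolding open_mem by blast
    then obtain n where n: "0 < p n" "s = ?E n" unfolding enum_mem by blast
    define N where "N = Suc n + g (length s)"
    have gm: "strict_mono g" using g by (simp add: ramsey_def)
    have "set s \<subseteq> set (map x [0..<N])"
    proof
      fix v assume "v \<in> set s"
      then obtain k where k: "k < length s" "v = s ! k" by (auto simp: in_set_conv_nth)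
      have "v = x (g k)" using s(2) k unfolding cone_mem by auto
      moreover have "g k < N" using strict_monoD[OF gm k(1)] unfolding N_def by simp
      ultimately show "v \<in> set (map x [0..<N])" by (simp del: upt_Suc)
    qed
    moreover have "n < N" unfolding N_def by simp
    ultimately show False using T[of N] n by blast
  qed
  have "x \<notin> open_of p" using out[OF id_ramsey] by simp
  moreover have "x \<in> HS (open_of p)" unfolding HS_def using xr out by blast
  ultimately show ?thesis by blast
qed

lemma treeB_path_exists:
  assumes on: "is_open_name p" and f: "f \<in> HS (open_of p)" "f \<notin> open_of p"
  shows "f \<in> paths (tree_of (\<lambda>n. if treeP p n then 1 else 0 :: nat))"
proof -
  let ?E = "\<lambda>n. list_decode (p n - 1)"
  have fr: "strict_mono f" using HS_ramsey[OF f(1)] by (simp add: ramsey_def)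
  show ?thesis
    unfolding paths_def tree_mem_q
  proof (intro CollectI allI conjI impI notI)
    fix N show "sorted_wrt (<) (map f [0..<N])"
      unfolding sorted_wrt_iff_nth_less using fr by (simp add: strict_mono_less)
  next
    fix N n assume n: "n < length (map f [0..<N])" "0 < p n"
      and sub: "set (?E n) \<subseteq> set (map f [0..<N])"
    have sE: "?E n \<in> enum_strings p" using n unfolding enum_mem by blast
    then have so: "sorted_wrt (<) (?E n)" using on unfolding is_open_name_def by blast
    have "set (?E n) \<subseteq> range f" using sub by auto
    from ix_exists[OF fr so this] obtain g where g: "strict_mono g" "\<forall>k<length (?E n). f (g k) = ?E n ! k"
      by blast
    have gr: "g \<in> ramsey" using g by (simp add: ramsey_def)
    have "f \<circ> g \<in> cone (?E n)" unfolding cone_mem using g ramsey_comp[OF HS_ramsey[OF f(1)] gr] by simp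
    then have "f \<circ> g \<in> open_of p" using sE unfolding open_mem by blast
    then show False using HS_out[OF f gr] by blast
  qed
qed

lemma red_B: "sW_le FindHS_Pi01 C_Baire"
proof (rule sW_le_intro[where A="\<lambda>\<alpha> xs. if treeP \<alpha> (xs!0) then 1 else 0" and B="\<lambda>\<alpha> xs. \<alpha> (xs!0)"])
  show "cfun 1 (\<lambda>\<alpha> xs. if treeP \<alpha> (xs!0) then 1 else 0)"
    using cfun_treeP unfolding cpred_def .
  show "cfun 1 (\<lambda>\<alpha> xs. \<alpha> (xs!0))"
    by (intro cfun_query cfun_proj; simp)
next
  fix p assume p: "p \<in> pdom FindHS_Pi01"
  let ?q = "\<lambda>n. if treeP p n then 1 else 0 :: nat"
  have on: "is_open_name p" and ne: "HS (open_of p) - open_of p \<noteq> {}"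
    using p unfolding FindHS_Pi01_def pdom_def by auto
  have e1: "(\<lambda>n. if treeP p ([n] ! 0) then 1 else 0) = ?q" by simp
  have e2: "(\<lambda>n. y ([n] ! 0)) = y" for y :: baire by simp
  obtain f where f: "f \<in> HS (open_of p)" "f \<notin> open_of p" using ne by blast
  have pne: "paths (tree_of ?q) \<noteq> {}" using treeB_path_exists[OF on f] by blast
  have d: "?q \<in> pdom C_Baire" unfolding C_Baire_def pdom_def using treeB_tree pne by simp
  have s: "\<forall>y\<in>psol C_Baire ?q. y \<in> psol FindHS_Pi01 p"
    unfolding C_Baire_def psol_def FindHS_Pi01_def using treeB_paths_sub by simp
  show "(\<lambda>n. if treeP p ([n] ! 0) then 1 else 0) \<in> pdom C_Baire \<and>
        (\<forall>y\<in>psol C_Baire (\<lambda>n. if treeP p ([n] ! 0) then 1 else 0). (\<lambda>n. y ([n] ! 0)) \<in> psol FindHS_Pi01 p)"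
    unfolding e1 e2 using d s by blast
qed

lemma cpred_comp1: "cpred 1 P \<Longrightarrow> cfun k F \<Longrightarrow> cpred k (\<lambda>\<alpha> xs. P \<alpha> [F \<alpha> xs])"
  unfolding cpred_def by (drule cfun_comp1) auto

lemma cpred_comp2: "cpred 2 P \<Longrightarrow> cfun k F \<Longrightarrow> cfun k G \<Longrightarrow> cpred k (\<lambda>\<alpha> xs. P \<alpha> [F \<alpha> xs, G \<alpha> xs])"
  unfolding cpred_def by (drule cfun_comp2) auto

definition Rr :: "baire \<Rightarrow> nat \<Rightarrow> nat \<Rightarrow> bool" where
  "Rr p a b \<longleftrightarrow> p a \<noteq> 0 \<and> length (list_decode a) < length (list_decode b) \<and>
     (\<forall>i<length (list_decode a). list_decode a ! i = list_decode b ! i)"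

definition Qg :: "baire \<Rightarrow> nat list \<Rightarrow> bool" where
  "Qg p s \<longleftrightarrow> length s = 2 \<and> s!0 < s!1 \<and> Rr p (s!0) (s!1)"
definition Qb :: "baire \<Rightarrow> nat list \<Rightarrow> bool" where
  "Qb p s \<longleftrightarrow> length s = 2 \<and> s!0 < s!1 \<and> \<not> Rr p (s!0) (s!1)"

lemma Rr_eq: "Rr p a b \<longleftrightarrow> p a \<noteq> 0 \<and> lenc a < lenc b \<and> (\<forall>i<lenc a. nthc a i = nthc b i)"
  unfolding Rr_def lenc_eq by (auto simp: nthc_eq)

lemma cpred_Rr: "cpred 2 (\<lambda>\<alpha> ys. Rr \<alpha> (ys!0) (ys!1))"
proof -
  have a: "cpred 2 (\<lambda>\<alpha> ys. \<alpha> (ys!0) \<noteq> 0)"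
    by (intro cpred_not cpred_eq cfun_query cfun_proj cfun_const; simp)
  have b: "cpred 2 (\<lambda>\<alpha> ys. lenc (ys!0) < lenc (ys!1))"
    by (intro cpred_less cfun_lenc cfun_proj; simp)
  have c3: "cpred (Suc (Suc (Suc 0))) (\<lambda>\<alpha> zs. nthc (zs!1) (zs!0) = nthc (zs!2) (zs!0))"
    by (intro cpred_eq cfun_nthc cfun_proj; simp)
  have c: "cpred 2 (\<lambda>\<alpha> ys. \<forall>i<lenc (ys!0). nthc (ys!0) i = nthc (ys!1) i)"
    by (rule cpred_cong'[OF cpred_ball[OF cfun_lenc[OF cfun_proj0] c3]]) auto
  show ?thesis unfolding Rr_eq by (intro cpred_and a b c)
qed

definition Qgc :: "baire \<Rightarrow> nat \<Rightarrow> bool" where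
  "Qgc p n \<longleftrightarrow> lenc n = 2 \<and> nthc n 0 < nthc n 1 \<and> Rr p (nthc n 0) (nthc n 1)"
definition Qbc :: "baire \<Rightarrow> nat \<Rightarrow> bool" where
  "Qbc p n \<longleftrightarrow> lenc n = 2 \<and> nthc n 0 < nthc n 1 \<and> \<not> Rr p (nthc n 0) (nthc n 1)"

lemma Qgc_eq: "Qgc p n = Qg p (list_decode n)" and Qbc_eq: "Qbc p n = Qb p (list_decode n)"
  unfolding Qgc_def Qg_def Qbc_def Qb_def lenc_eq by (auto simp: nthc_eq)

lemma cpred_Qgc: "cpred 1 (\<lambda>\<alpha> xs. Qgc \<alpha> (xs!0))" and cpred_Qbc: "cpred 1 (\<lambda>\<alpha> xs. Qbc \<alpha> (xs!0))"
proof -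
  have cF: "cfun 1 (\<lambda>\<alpha> xs. nthc (xs!0) 0)" by (intro cfun_nthc cfun_proj cfun_const; simp)
  have cG: "cfun 1 (\<lambda>\<alpha> xs. nthc (xs!0) 1)" by (intro cfun_nthc cfun_proj cfun_const; simp)
  have r: "cpred 1 (\<lambda>\<alpha> xs. Rr \<alpha> (nthc (xs!0) 0) (nthc (xs!0) 1))"
    by (rule cpred_cong[OF cpred_comp2[OF cpred_Rr cF cG]]) simp
  have a: "cpred 1 (\<lambda>\<alpha> xs. lenc (xs!0) = 2)"
    by (intro cpred_eq cfun_lenc cfun_proj cfun_const; simp)
  have b: "cpred 1 (\<lambda>\<alpha> xs. nthc (xs!0) 0 < nthc (xs!0) 1)"
    by (intro cpred_less cfun_nthc cfun_proj cfun_const; simp)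
  show "cpred 1 (\<lambda>\<alpha> xs. Qgc \<alpha> (xs!0))" unfolding Qgc_def by (intro cpred_and a b r)
  show "cpred 1 (\<lambda>\<alpha> xs. Qbc \<alpha> (xs!0))" unfolding Qbc_def by (intro cpred_and cpred_not a b r)
qed

definition half :: "nat \<Rightarrow> nat" where "half m = (LEAST d. m < d + d + 2)"

lemma half_eq: "half m = m div 2"
  unfolding half_def by (rule Least_equality) auto

lemma cfun_half: "cfun k F \<Longrightarrow> cfun k (\<lambda>\<alpha> xs. F \<alpha> xs div 2)"
proof -
  have "cfun (Suc 1) (\<lambda>\<alpha> ys. if ys!1 < ys!0 + ys!0 + 2 then 0 else 1)"
    by (intro cfun_if cpred_less cfun_add cfun_proj cfun_const; simp)
  then have "cfun 1 (\<lambda>\<alpha> xs. LEAST n. (if (n # xs)!1 < (n # xs)!0 + (n # xs)!0 + 2 then 0 else 1) = (0::nat))"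
    apply (rule cfun_mini)
    apply (rule_tac x="xs!0" in exI)
    apply auto
    done
  then have "cfun 1 (\<lambda>\<alpha> xs. xs!0 div 2)" by (rule cfun_cong) (simp add: half_eq[symmetric] half_def)
  then show "cfun k F \<Longrightarrow> ?thesis" using cfun_comp1 by fastforce
qed

definition Af :: "baire \<Rightarrow> nat list \<Rightarrow> nat" where
  "Af p xs = (if xs!0 - (xs!0 div 2 + xs!0 div 2) = 0
      then (if Qgc p (xs!0 div 2) then xs!0 div 2 + 1 else 0)
      else (if Qbc p (xs!0 div 2) then xs!0 div 2 + 1 else 0))"

lemma cfun_Af: "cfun 1 Af"
  unfolding Af_def
  by (intro cfun_if cpred_eq cfun_sub cfun_add cfun_half cfun_proj cfun_const
      cpred_comp1[OF cpred_Qgc, simplified] cpred_comp1[OF cpred_Qbc, simplified]; simp)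

lemma pleft_Af: "pleft (\<lambda>n. Af p [n]) = (\<lambda>n. if Qg p (list_decode n) then n + 1 else 0)"
  unfolding pleft_def Af_def by (auto simp: Qgc_eq)

lemma pright_Af: "pright (\<lambda>n. Af p [n]) = (\<lambda>n. if Qb p (list_decode n) then n + 1 else 0)"
  unfolding pright_def Af_def by (auto simp: Qbc_eq)

lemma enum_if: "enum_strings (\<lambda>n. if Q (list_decode n) then n + 1 else 0) = {s. Q s}"
proof
  show "enum_strings (\<lambda>n. if Q (list_decode n) then n + 1 else 0) \<subseteq> {s. Q s}"
    unfolding enum_strings_def by (auto split: if_splits)
next
  show "{s. Q s} \<subseteq> enum_strings (\<lambda>n. if Q (list_decode n) then n + 1 else 0)"
  proof
    fix s assume "s \<in> {s. Q s}"
    then have "Q s" by simp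
    then show "s \<in> enum_strings (\<lambda>n. if Q (list_decode n) then n + 1 else 0)"
      unfolding enum_strings_def
      by (intro CollectI exI[of _ "list_encode s"]) simp
  qed
qed

lemma len2_eq: "length s = 2 \<Longrightarrow> s = [s!0, s!1]"
  by (cases s; cases "tl s") (auto simp: numeral_2_eq_2)

lemma open_Q:
  assumes "\<And>a b. Q [a, b] \<longleftrightarrow> a < b \<and> T a b"
    and "\<And>s. Q s \<Longrightarrow> length s = 2"
  shows "h \<in> open_of (\<lambda>n. if Q (list_decode n) then n + 1 else 0) \<longleftrightarrow> h \<in> ramsey \<and> T (h 0) (h 1)"
proof
  assume "h \<in> open_of (\<lambda>n. if Q (list_decode n) then n + 1 else 0)"
  then obtain s where s: "Q s" "h \<in> cone s" unfolding open_mem enum_if by blast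
  have l: "length s = 2" using assms(2) s(1) by blast
  then have e: "s = [s!0, s!1]" by (rule len2_eq)
  have "h 0 = s!0" "h 1 = s!1" "h \<in> ramsey" using s(2) l unfolding cone_mem by auto
  then show "h \<in> ramsey \<and> T (h 0) (h 1)" using s(1) e assms(1) by metis
next
  assume h: "h \<in> ramsey \<and> T (h 0) (h 1)"
  then have "h 0 < h 1" unfolding ramsey_def by (simp add: strict_mono_less)
  then have q: "Q [h 0, h 1]" using h assms(1) by blast
  have "h \<in> cone [h 0, h 1]" unfolding cone_mem using h by (auto simp: less_Suc_eq)
  then show "h \<in> open_of (\<lambda>n. if Q (list_decode n) then n + 1 else 0)"
    unfolding open_mem enum_if using q by blast
qed

lemma Qg_pair: "Qg p [a, b] \<longleftrightarrow> a < b \<and> Rr p a b" and Qg_len: "Qg p s \<Longrightarrow> length s = 2"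
  unfolding Qg_def by auto
lemma Qb_pair: "Qb p [a, b] \<longleftrightarrow> a < b \<and> \<not> Rr p a b" and Qb_len: "Qb p s \<Longrightarrow> length s = 2"
  unfolding Qb_def by auto

lemma open_Qg: "h \<in> open_of (\<lambda>n. if Qg p (list_decode n) then n + 1 else 0) \<longleftrightarrow> h \<in> ramsey \<and> Rr p (h 0) (h 1)"
  by (rule open_Q[OF Qg_pair Qg_len])
lemma open_Qb: "h \<in> open_of (\<lambda>n. if Qb p (list_decode n) then n + 1 else 0) \<longleftrightarrow> h \<in> ramsey \<and> \<not> Rr p (h 0) (h 1)"
  by (rule open_Q[OF Qb_pair Qb_len])

lemma sorted2: "length s = 2 \<Longrightarrow> s!0 < s!1 \<Longrightarrow> sorted_wrt (<) s"
  by (subst len2_eq) auto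

lemma on_Qg: "is_open_name (\<lambda>n. if Qg p (list_decode n) then n + 1 else 0)"
  unfolding is_open_name_def enum_if by (auto simp: Qg_def intro: sorted2)
lemma on_Qb: "is_open_name (\<lambda>n. if Qb p (list_decode n) then n + 1 else 0)"
  unfolding is_open_name_def enum_if by (auto simp: Qb_def intro: sorted2)

lemma triangle_less: "a < b \<Longrightarrow> triangle a < triangle b"
proof (induct b)
  case 0 then show ?case by simp
next
  case (Suc b) then show ?case by (cases "a = b") (auto simp: triangle_Suc)
qed

lemma prod_encode_less2: "u < v \<Longrightarrow> prod_encode (y, u) < prod_encode (y, v)"
  unfolding prod_encode_def using triangle_less[of "y + u" "y + v"] by simp

lemma enc_snoc: "list_encode xs < list_encode (xs @ [a])"
  by (induct xs) (auto intro: prod_encode_less2)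

lemma enc_prefix_mono: "strict_mono (\<lambda>i. list_encode (map x [0..<i]))"
  unfolding strict_mono_Suc_iff by (simp add: enc_snoc)

lemma clopen_C:
  fixes p :: baire
  shows "is_clopen_name (\<lambda>n. Af p [n])"
  unfolding is_clopen_name_def pleft_Af pright_Af
proof (intro conjI)
  show "is_open_name (\<lambda>n. if Qg p (list_decode n) then n + 1 else 0)" by (rule on_Qg)
  show "is_open_name (\<lambda>n. if Qb p (list_decode n) then n + 1 else 0)" by (rule on_Qb)
  show "open_of (\<lambda>n. if Qg p (list_decode n) then n + 1 else 0) \<inter> open_of (\<lambda>n. if Qb p (list_decode n) then n + 1 else 0) = {}"
    using open_Qg open_Qb by blast
  show "open_of (\<lambda>n. if Qg p (list_decode n) then n + 1 else 0) \<union> open_of (\<lambda>n. if Qb p (list_decode n) then n + 1 else 0) = ramsey"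
    using open_Qg open_Qb by blast
qed

lemma C_exists:
  assumes x: "x \<in> paths (tree_of p)"
  shows "(\<lambda>i. list_encode (map x [0..<i])) \<in> HS (open_of (\<lambda>n. if Qg p (list_decode n) then n + 1 else 0))
         \<inter> open_of (\<lambda>n. if Qg p (list_decode n) then n + 1 else 0)"
proof -
  let ?f = "\<lambda>i. list_encode (map x [0..<i])"
  let ?L = "open_of (\<lambda>n. if Qg p (list_decode n) then n + 1 else 0)"
  have fr: "?f \<in> ramsey" using enc_prefix_mono by (simp add: ramsey_def)
  have all: "?f \<circ> g \<in> ?L" if g: "g \<in> ramsey" for g
  proof -
    have g01: "g 0 < g 1" using g unfolding ramsey_def by (simp add: strict_mono_less)
    have t: "map x [0..<g 0] \<in> tree_of p" using x unfolding paths_def by blast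
    have "Rr p (?f (g 0)) (?f (g 1))"
      unfolding Rr_def using t g01 by (simp add: tree_of_def)
    then show ?thesis unfolding open_Qg using ramsey_comp[OF fr g] by simp
  qed
  have "?f \<in> ?L" using all[OF id_ramsey] by simp
  moreover have "?f \<in> HS ?L" unfolding HS_def using fr all by blast
  ultimately show ?thesis by blast
qed

lemma C_output:
  assumes tn: "is_tree_name p"
    and y: "y \<in> HS (open_of (\<lambda>n. if Qg p (list_decode n) then n + 1 else 0))
         \<inter> open_of (\<lambda>n. if Qg p (list_decode n) then n + 1 else 0)"
  shows "(\<lambda>n. nthc (y (Suc n)) n) \<in> paths (tree_of p)"
proof -
  let ?L = "open_of (\<lambda>n. if Qg p (list_decode n) then n + 1 else 0)"
  let ?\<sigma> = "\<lambda>i. list_decode (y i)"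
  have yall: "y \<circ> g \<in> ?L" if "g \<in> ramsey" for g using HS_in y that by blast
  have R: "Rr p (y i) (y j)" if ij: "i < j" for i j
  proof -
    define g where "g k = (if k = 0 then i else j + k - 1)" for k
    have "strict_mono g"
      unfolding strict_mono_Suc_iff by (auto simp: g_def ij)
    then have "g \<in> ramsey" by (simp add: ramsey_def)
    then have "y \<circ> g \<in> ?L" by (rule yall)
    then show ?thesis unfolding open_Qg by (simp add: g_def)
  qed
  have pref: "?\<sigma> i ! k = ?\<sigma> j ! k" if "i < j" "k < length (?\<sigma> i)" for i j k
    using R[OF that(1)] that(2) unfolding Rr_def by blast
  have lenlt: "length (?\<sigma> i) < length (?\<sigma> j)" if "i < j" for i j
    using R[OF that] unfolding Rr_def by blast
  have lenge: "i \<le> length (?\<sigma> i)" for i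
  proof (induct i)
    case 0 then show ?case by simp
  next
    case (Suc i) then show ?case using lenlt[of i "Suc i"] by simp
  qed
  have inT: "?\<sigma> i \<in> tree_of p" for i
    using R[of i "Suc i"] unfolding Rr_def tree_of_def by (simp add: list_decode_inverse)
  have r: "nthc (y (Suc n)) n = ?\<sigma> (Suc n) ! n" for n
    using lenge[of "Suc n"] by (simp add: nthc_eq)
  have m: "map (\<lambda>n. nthc (y (Suc n)) n) [0..<n] = take n (?\<sigma> n)" for n
  proof (rule nth_equalityI)
    show "length (map (\<lambda>n. nthc (y (Suc n)) n) [0..<n]) = length (take n (?\<sigma> n))"
      using lenge[of n] by simp
  next
    fix k assume "k < length (map (\<lambda>n. nthc (y (Suc n)) n) [0..<n])"
    then have k: "k < n" by simp
    have "?\<sigma> (Suc k) ! k = ?\<sigma> n ! k"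
    proof (cases "Suc k = n")
      case True then show ?thesis by simp
    next
      case False then have "Suc k < n" using k by simp
      moreover have "k < length (?\<sigma> (Suc k))" using lenge[of "Suc k"] by simp
      ultimately show ?thesis using pref by blast
    qed
    then show "map (\<lambda>n. nthc (y (Suc n)) n) [0..<n] ! k = take n (?\<sigma> n) ! k"
      using k r by simp
  qed
  show ?thesis unfolding paths_def
  proof (intro CollectI allI)
    fix n
    have "take n (?\<sigma> n) @ drop n (?\<sigma> n) \<in> tree_of p" using inT[of n] by simp
    then have "take n (?\<sigma> n) \<in> tree_of p" using tn unfolding is_tree_name_def by blast
    then show "map (\<lambda>n. nthc (y (Suc n)) n) [0..<n] \<in> tree_of p" using m by simp
  qed
qed

lemma red_C: "sW_le C_Baire FindHS_Delta01"
proof (rule sW_le_intro[where A=Af and B="\<lambda>\<alpha> xs. nthc (\<alpha> (Suc (xs!0))) (xs!0)"])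
  show "cfun 1 Af" by (rule cfun_Af)
  show "cfun 1 (\<lambda>\<alpha> xs. nthc (\<alpha> (Suc (xs!0))) (xs!0))"
    by (intro cfun_nthc cfun_query cfun_succ cfun_proj; simp)
next
  fix p assume p: "p \<in> pdom C_Baire"
  have tn: "is_tree_name p" and ne: "paths (tree_of p) \<noteq> {}"
    using p unfolding C_Baire_def pdom_def by auto
  obtain x where x: "x \<in> paths (tree_of p)" using ne by blast
  have hs: "HS (open_of (pleft (\<lambda>n. Af p [n]))) \<inter> open_of (pleft (\<lambda>n. Af p [n])) \<noteq> {}"
    unfolding pleft_Af using C_exists[OF x] by blast
  have d: "(\<lambda>n. Af p [n]) \<in> pdom FindHS_Delta01"
    unfolding FindHS_Delta01_def pdom_def using clopen_C[of p] hs by simp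
  have outp: "(\<lambda>n. nthc (y (Suc n)) n) \<in> paths (tree_of p)"
    if "y \<in> HS (open_of (pleft (\<lambda>n. Af p [n]))) \<inter> open_of (pleft (\<lambda>n. Af p [n]))" for y
    using C_output[OF tn] that unfolding pleft_Af by blast
  have s: "\<forall>y\<in>psol FindHS_Delta01 (\<lambda>n. Af p [n]). (\<lambda>n. nthc (y (Suc ([n]!0))) ([n]!0)) \<in> psol C_Baire p"
    unfolding FindHS_Delta01_def psol_def C_Baire_def using outp by simp
  show "(\<lambda>n. Af p [n]) \<in> pdom FindHS_Delta01 \<and>
        (\<forall>y\<in>psol FindHS_Delta01 (\<lambda>n. Af p [n]). (\<lambda>n. nthc (y (Suc ([n]!0))) ([n]!0)) \<in> psol C_Baire p)"
    using d s by blast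
qed

theorem mainTheorem3:
  shows "sW_equiv C_Baire FindHS_Delta01 \<and> sW_equiv FindHS_Delta01 FindHS_Pi01"
  unfolding sW_equiv_def
  using red_A red_B red_C sW_trans by blast

end
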